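(* Let $A,B\in\mathrm{SL}_2\mathbb{Z}_{\ge0}$ be noncommuting and such that the pair $A,B$ is well oriented, and assume $\mathrm{tr}(A)<\mathrm{tr}(B)$ and $\mathrm{tr}(AB)<\mathrm{tr}(B^2)$. Then $b$ is the only optimal word.
   Context: $\mathrm{SL}_2\mathbb{Z}_{\ge0}$ denotes the $2\times2$ matrices with nonnegative integer entries and determinant $1$. Fixed points are taken for the Möbius action on $\partial\mathcal{H}=\mathbb{P}^1\mathbb{R}$; $\alpha^\pm$ ($\beta^\pm$) are the attracting/repelling fixed points of $A$ ($B$), equal to the unique fixed point if parabolic. With $\partial\mathcal{H}$ cyclically ordered and $[\alpha,\beta]$ the closed counterclockwise interval from $\alpha$ to $\beta$, let $I^+=\{\alpha^+\}$ if $\alpha^+=\beta^+$, and otherwise the one of $[\alpha^+,\beta^+],[\beta^+,\alpha^+]$ mapped into itself by both $A$ and $B$ (if it exists); define $I^-$ likewise with $A^{-1},B^{-1},\alpha^-,\beta^-$. The pair is coherently oriented if both exist, and well oriented if $A,B$ is coherently oriented but $A,B^{-1}$ is not. Words: $F_2^+$ is the free semigroup of nonempty words over $\{a,b\}$, $|w|$ the length, $\phi(a)=A,\phi(b)=B$, $[w]=\mathrm{tr}(\phi(w))$. Define $w\preceq u$ iff $[w^{|u|}]\le[u^{|w|}]$; $w$ is maximal if $u\preceq w$ for all $u$. A Lyndon word is one strictly smaller lexicographically ($a<b$) than each of its proper rotations. A complete set of optimal words is a set of pairwise distinct maximal Lyndon words such that every maximal word is a power of a rotation of one of them; it is unique if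 it exists, and its elements are the optimal words. *)

theory Defs
  imports "HOL-Analysis.Analysis"
begin

type_synonym mat2 = "real^2^2"

definition SL2Z_nonneg :: "mat2 set" where
  "SL2Z_nonneg = {M. (\<forall>i j. M$i$j \<in> \<int> \<and> M$i$j \<ge> 0) \<and> det M = 1}"

datatype bdry = Fin real | Infty

definition proj :: "real^2 \<Rightarrow> bdry" where
  "proj v = (if v$2 = 0 then Infty else Fin (v$1 / v$2))"

definition lift :: "bdry \<Rightarrow> real^2" where
  "lift p = (case p of Fin x \<Rightarrow> vector [x, 1] | Infty \<Rightarrow> vector [1, 0])"

text \<open>Moebius action z \<mapsto> (az+b)/(cz+d) on the boundary.\<close>
definition mob :: "mat2 \<Rightarrow> bdry \<Rightarrow> bdry" where
  "mob M p = proj (M *v lift p)"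

text \<open>For M of determinant 1 with trace \<ge> 2 the eigenvalues are
  (tr \<plusminus> sqrt(tr^2-4))/2; the attracting (repelling) fixed point is the
  eigendirection of the larger (smaller) eigenvalue. In the parabolic case
  both coincide with the unique fixed point.\<close>
definition lam_max :: "mat2 \<Rightarrow> real" where
  "lam_max M = (trace M + sqrt ((trace M)^2 - 4)) / 2"

definition lam_min :: "mat2 \<Rightarrow> real" where
  "lam_min M = (trace M - sqrt ((trace M)^2 - 4)) / 2"

definition attr_fix :: "mat2 \<Rightarrow> bdry" where
  "attr_fix M = (THE p. \<exists>v. v \<noteq> 0 \<and> M *v v = lam_max M *\<^sub>R v \<and> p = proj v)"

definition rep_fix :: "mat2 \<Rightarrow> bdry" where
  "rep_fix M = (THE p. \<exists>v. v \<noteq> 0 \<and> M *v v = lam_min M *\<^sub>R v \<and> p = proj v)"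

text \<open>Closed counterclockwise interval from p to q on \<partial>H: starting at p and
  moving in the increasing direction of R (passing through \<infinity>) until q.\<close>
definition cint :: "bdry \<Rightarrow> bdry \<Rightarrow> bdry set" where
  "cint p q = (case (p, q) of
     (Fin a, Fin b) \<Rightarrow>
        (if a \<le> b then {Fin x | x. a \<le> x \<and> x \<le> b}
         else {Fin x | x. a \<le> x} \<union> {Infty} \<union> {Fin x | x. x \<le> b})
   | (Fin a, Infty) \<Rightarrow> {Fin x | x. a \<le> x} \<union> {Infty}
   | (Infty, Fin b) \<Rightarrow> {Infty} \<union> {Fin x | x. x \<le> b}
   | (Infty, Infty) \<Rightarrow> {Infty})"

definition interval_exists :: "mat2 \<Rightarrow> mat2 \<Rightarrow> bdry \<Rightarrow> bdry \<Rightarrow> bool" where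
  "interval_exists F G p q \<longleftrightarrow>
     p = q \<or> (\<exists>J \<in> {cint p q, cint q p}. mob F ` J \<subseteq> J \<and> mob G ` J \<subseteq> J)"

definition coherently_oriented :: "mat2 \<Rightarrow> mat2 \<Rightarrow> bool" where
  "coherently_oriented A B \<longleftrightarrow>
     interval_exists A B (attr_fix A) (attr_fix B) \<and>
     interval_exists (matrix_inv A) (matrix_inv B) (rep_fix A) (rep_fix B)"

definition well_oriented :: "mat2 \<Rightarrow> mat2 \<Rightarrow> bool" where
  "well_oriented A B \<longleftrightarrow>
     coherently_oriented A B \<and> \<not> coherently_oriented A (matrix_inv B)"

datatype letter = La | Lb

definition letter_less :: "(letter \<times> letter) set" where
  "letter_less = {(La, Lb)}"

type_synonym word = "letter list"

definition phi_letter :: "mat2 \<Rightarrow> mat2 \<Rightarrow> letter \<Rightarrow> mat2" where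
  "phi_letter A B l = (case l of La \<Rightarrow> A | Lb \<Rightarrow> B)"

definition phi :: "mat2 \<Rightarrow> mat2 \<Rightarrow> word \<Rightarrow> mat2" where
  "phi A B w = foldr (\<lambda>l M. phi_letter A B l ** M) w (mat 1)"

definition trw :: "mat2 \<Rightarrow> mat2 \<Rightarrow> word \<Rightarrow> real" where
  "trw A B w = trace (phi A B w)"

definition wpow :: "word \<Rightarrow> nat \<Rightarrow> word" where
  "wpow w n = concat (replicate n w)"

definition wle :: "mat2 \<Rightarrow> mat2 \<Rightarrow> word \<Rightarrow> word \<Rightarrow> bool" where
  "wle A B w u \<longleftrightarrow> trw A B (wpow w (length u)) \<le> trw A B (wpow u (length w))"

definition maximal :: "mat2 \<Rightarrow> mat2 \<Rightarrow> word \<Rightarrow> bool" where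
  "maximal A B w \<longleftrightarrow> w \<noteq> [] \<and> (\<forall>u. u \<noteq> [] \<longrightarrow> wle A B u w)"

definition lyndon :: "word \<Rightarrow> bool" where
  "lyndon w \<longleftrightarrow> w \<noteq> [] \<and>
     (\<forall>k. 0 < k \<and> k < length w \<longrightarrow> (w, rotate k w) \<in> lexord letter_less)"

text \<open>A set (hence pairwise distinct elements) of maximal Lyndon words such that
  every maximal word is a power of a rotation of one of them.\<close>
definition complete_optimal :: "mat2 \<Rightarrow> mat2 \<Rightarrow> word set \<Rightarrow> bool" where
  "complete_optimal A B S \<longleftrightarrow>
     (\<forall>w \<in> S. maximal A B w \<and> lyndon w) \<and>
     (\<forall>u. maximal A B u \<longrightarrow>
        (\<exists>w \<in> S. \<exists>k j. 0 < k \<and> u = wpow (rotate j w) k))"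

end

theory Submission
  imports Defs
begin

lemma mm_entry: "((X::real^2^2) ** Y)$i$j = X$i$1 * Y$1$j + X$i$2 * Y$2$j"
  by (simp add: matrix_matrix_mult_def sum_2)

lemma trace2: "trace (X::real^2^2) = X$1$1 + X$2$2"
  by (simp add: trace_def sum_2)

lemma det2: "det (X::real^2^2) = X$1$1 * X$2$2 - X$1$2 * X$2$1"
  by (rule det_2)

lemma phi_Nil: "phi A B [] = mat 1" by (simp add: phi_def)
lemma phi_Cons: "phi A B (x # u) = phi_letter A B x ** phi A B u" by (simp add: phi_def)

lemma trace_bound:
  fixes m11 m12 m21 m22 t L :: real
  assumes "m11 \<ge> 0" "m12 \<ge> 0" "m21 \<ge> 0" "m22 \<ge> 0" "m11*m22 - m12*m21 = 1"
    "t > 0" "L > 0" "t*m11 + m21 \<le> L*t" "t*m12 + m22 \<le> L"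
  shows "m11 + m22 \<le> L + 1/L"
proof -
  have h1: "L - m11 \<ge> m21 / t" using assms by (simp add: field_simps)
  have h2: "L - m22 \<ge> t * m12" using assms by simp
  have h0: "0 \<le> m21 / t" using assms by simp
  have h4: "0 \<le> t * m12" using assms by simp
  have "(L - m11) * (L - m22) \<ge> (m21/t) * (t*m12)"
    by (rule mult_mono[OF h1 h2]) (use assms h0 h1 h4 in linarith)+
  then have "(L - m11) * (L - m22) \<ge> m21 * m12" using assms by simp
  then have "L*L + 1 \<ge> L * (m11 + m22)" using assms by (simp add: algebra_simps)
  then show ?thesis using assms by (simp add: field_simps)
qed

lemma trace_bound_strict:
  fixes m11 m12 m21 m22 t L :: real
  assumes "m11 \<ge> 0" "m12 \<ge> 0" "m21 \<ge> 0" "m22 \<ge> 0" "m11*m22 - m12*m21 = 1"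
    "t > 0" "L > 0" "t*m11 + m21 < L*t" "t*m12 + m22 < L"
  shows "m11 + m22 < L + 1/L"
proof -
  have h1: "L - m11 > m21 / t" using assms by (simp add: field_simps)
  have h2: "L - m22 > t * m12" using assms by simp
  have h0: "0 \<le> m21 / t" using assms by simp
  have h4: "0 \<le> t * m12" using assms by simp
  have "(L - m11) * (L - m22) > (m21/t) * (t*m12)"
    by (rule mult_strict_mono[OF h1 h2]) (use assms h0 h1 h4 in linarith)+
  then have "(L - m11) * (L - m22) > m21 * m12" using assms by simp
  then have "L*L + 1 > L * (m11 + m22)" using assms by (simp add: algebra_simps)
  then show ?thesis using assms by (simp add: field_simps)
qed

definition nonneg2 :: "real^2^2 \<Rightarrow> bool" where
  "nonneg2 M \<longleftrightarrow> M$1$1 \<ge> 0 \<and> M$1$2 \<ge> 0 \<and> M$2$1 \<ge> 0 \<and> M$2$2 \<ge> 0"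

lemma word_bound:
  fixes A B :: "real^2^2" and t lam :: real
  assumes nA: "nonneg2 A" and nB: "nonneg2 B" and dA: "det A = 1" and dB: "det B = 1"
    and pA: "A$1$1 > 0" "A$2$2 > 0" and pB: "B$1$1 > 0" "B$2$2 > 0"
    and t: "t > 0" and lam: "lam > 0"
    and cA1: "t*A$1$1 + A$2$1 < lam*t" and cA2: "t*A$1$2 + A$2$2 < lam"
    and cB1: "t*B$1$1 + B$2$1 \<le> lam*t" and cB2: "t*B$1$2 + B$2$2 \<le> lam"
  shows "nonneg2 (phi A B u) \<and> det (phi A B u) = 1 \<and>
     t*(phi A B u)$1$1 + (phi A B u)$2$1 \<le> lam^length u * t \<and>
     t*(phi A B u)$1$2 + (phi A B u)$2$2 \<le> lam^length u \<and>
     (La \<in> set u \<longrightarrow> t*(phi A B u)$1$1 + (phi A B u)$2$1 < lam^length u * t \<and>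
     t*(phi A B u)$1$2 + (phi A B u)$2$2 < lam^length u)"
proof (induction u)
  case Nil
  then show ?case using t lam by (simp add: phi_Nil nonneg2_def mat_def det_I[unfolded mat_def])
next
  case (Cons x u)
  define M where "M = phi A B u"
  define X where "X = phi_letter A B x"
  have IH: "nonneg2 M" "det M = 1" "t*M$1$1 + M$2$1 \<le> lam^length u * t"
     "t*M$1$2 + M$2$2 \<le> lam^length u"
     "La \<in> set u \<Longrightarrow> t*M$1$1 + M$2$1 < lam^length u * t \<and> t*M$1$2 + M$2$2 < lam^length u"
    using Cons.IH unfolding M_def by auto
  have nX: "nonneg2 X" using nA nB by (cases x) (auto simp: X_def phi_letter_def)
  have dX: "det X = 1" using dA dB by (cases x) (auto simp: X_def phi_letter_def)
  have pX: "X$1$1 > 0" "X$2$2 > 0" using pA pB by (cases x; auto simp: X_def phi_letter_def)+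
  have cX1: "t*X$1$1 + X$2$1 \<le> lam*t" and cX2: "t*X$1$2 + X$2$2 \<le> lam"
    using cA1 cA2 cB1 cB2 by (cases x; auto simp: X_def phi_letter_def)+
  have P: "phi A B (x # u) = X ** M" by (simp add: phi_Cons X_def M_def)
  let ?c1 = "lam*t - (t*X$1$1 + X$2$1)" and ?c2 = "lam - (t*X$1$2 + X$2$2)"
  have c1: "?c1 \<ge> 0" and c2: "?c2 \<ge> 0" using cX1 cX2 by auto
  have e1: "t*(X**M)$1$1 + (X**M)$2$1 = lam * (t*M$1$1) + lam * M$2$1 - (?c1 * M$1$1 + ?c2 * M$2$1)"
    by (simp add: mm_entry algebra_simps)
  have e2: "t*(X**M)$1$2 + (X**M)$2$2 = lam * (t*M$1$2) + lam * M$2$2 - (?c1 * M$1$2 + ?c2 * M$2$2)"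
    by (simp add: mm_entry algebra_simps)
  have nM: "M$1$1 \<ge> 0" "M$1$2 \<ge> 0" "M$2$1 \<ge> 0" "M$2$2 \<ge> 0" using IH(1) by (auto simp: nonneg2_def)
  have s1: "?c1 * M$1$1 + ?c2 * M$2$1 \<ge> 0" using c1 c2 nM by simp
  have s2: "?c1 * M$1$2 + ?c2 * M$2$2 \<ge> 0" using c1 c2 nM by simp
  have b1: "t*(X**M)$1$1 + (X**M)$2$1 \<le> lam^length (x#u) * t"
  proof -
    have "lam * (t*M$1$1) + lam * M$2$1 \<le> lam * (lam^length u * t)"
      using IH(3) lam by (simp add: distrib_left[symmetric] mult_left_mono)
    then show ?thesis using e1 s1 by (simp add: algebra_simps)
  qed
  have b2: "t*(X**M)$1$2 + (X**M)$2$2 \<le> lam^length (x#u)"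
  proof -
    have "lam * (t*M$1$2) + lam * M$2$2 \<le> lam * (lam^length u)"
      using IH(4) lam by (simp add: distrib_left[symmetric] mult_left_mono)
    then show ?thesis using e2 s2 by (simp add: algebra_simps)
  qed
  have nXM: "nonneg2 (X ** M)" using nX nM by (simp add: nonneg2_def mm_entry)
  have dXM: "det (X ** M) = 1" using dX IH(2) by (simp add: det_mul)
  have strict: "t*(X**M)$1$1 + (X**M)$2$1 < lam^length (x#u) * t \<and>
     t*(X**M)$1$2 + (X**M)$2$2 < lam^length (x#u)" if "La \<in> set (x#u)"
  proof (cases "x = La")
    case True
    have c1': "?c1 > 0" and c2': "?c2 > 0" using cA1 cA2 True by (auto simp: X_def phi_letter_def)
    have d: "det M = M$1$1 * M$2$2 - M$1$2 * M$2$1" by (rule det2)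
    have "M$1$1 > 0 \<or> M$2$1 > 0"
    proof (rule ccontr)
      assume "\<not> ?thesis" then have "M$1$1 = 0" "M$2$1 = 0" using nM by auto
      then show False using IH(2) d by simp
    qed
    then have s1': "?c1 * M$1$1 + ?c2 * M$2$1 > 0" using c1' c2' nM
      by (auto intro: add_pos_nonneg add_nonneg_pos)
    have "M$1$2 > 0 \<or> M$2$2 > 0"
    proof (rule ccontr)
      assume "\<not> ?thesis" then have "M$1$2 = 0" "M$2$2 = 0" using nM by auto
      then show False using IH(2) d by simp
    qed
    then have s2': "?c1 * M$1$2 + ?c2 * M$2$2 > 0" using c1' c2' nM
      by (auto intro: add_pos_nonneg add_nonneg_pos)
    have "lam * (t*M$1$1) + lam * M$2$1 \<le> lam * (lam^length u * t)"
      using IH(3) lam by (simp add: distrib_left[symmetric] mult_left_mono)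
    moreover have "lam * (t*M$1$2) + lam * M$2$2 \<le> lam * (lam^length u)"
      using IH(4) lam by (simp add: distrib_left[symmetric] mult_left_mono)
    ultimately show ?thesis using e1 e2 s1' s2' by (simp add: algebra_simps)
  next
    case False
    then have "La \<in> set u" using that by auto
    then have st: "t*M$1$1 + M$2$1 < lam^length u * t" "t*M$1$2 + M$2$2 < lam^length u" using IH(5) by auto
    have "lam * (t*M$1$1) + lam * M$2$1 < lam * (lam^length u * t)"
      using st(1) lam by (simp add: distrib_left[symmetric])
    moreover have "lam * (t*M$1$2) + lam * M$2$2 < lam * (lam^length u)"
      using st(2) lam by (simp add: distrib_left[symmetric])
    ultimately show ?thesis using e1 e2 s1 s2 by (simp add: algebra_simps)
  qed
  show ?case unfolding P using nXM dXM b1 b2 strict by blast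
qed

lemma SL_int: assumes "M \<in> SL2Z_nonneg" shows "M$i$j \<in> \<int>" "M$i$j \<ge> 0" "det M = 1"
  using assms by (auto simp: SL2Z_nonneg_def)

lemma struct:
  fixes M :: "real^2^2"
  assumes M: "M \<in> SL2Z_nonneg" and nI: "M \<noteq> mat 1"
  shows "\<exists>mu a1 a2 w1 w2. mu \<ge> 1 \<and> trace M = mu + 1/mu \<and> a1 \<ge> 0 \<and> a2 \<ge> 0 \<and> a1 + a2 > 0 \<and>
     w1 \<ge> 0 \<and> w2 \<ge> 0 \<and> M$1$1 = 1/mu + w1*a1 \<and> M$1$2 = w2*a1 \<and> M$2$1 = w1*a2 \<and>
     M$2$2 = 1/mu + w2*a2 \<and> (trace M > 2 \<longrightarrow> mu > 1 \<and> a1 > 0 \<and> a2 > 0 \<and> w1 > 0 \<and> w2 > 0)"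
proof -
  obtain k1 where k1: "M$1$1 = of_int k1" using SL_int(1)[OF M, of 1 1] by (auto elim: Ints_cases)
  obtain k2 where k2: "M$1$2 = of_int k2" using SL_int(1)[OF M, of 1 2] by (auto elim: Ints_cases)
  obtain k3 where k3: "M$2$1 = of_int k3" using SL_int(1)[OF M, of 2 1] by (auto elim: Ints_cases)
  obtain k4 where k4: "M$2$2 = of_int k4" using SL_int(1)[OF M, of 2 2] by (auto elim: Ints_cases)
  have nn: "k1 \<ge> 0" "k2 \<ge> 0" "k3 \<ge> 0" "k4 \<ge> 0" using SL_int(2)[OF M] k1 k2 k3 k4
    by (metis of_int_0_le_iff)+
  have "det M = 1" using M by (rule SL_int(3))
  then have dk: "k1*k4 - k2*k3 = 1" using k1 k2 k3 k4 det2[of M]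
    by (metis of_int_eq_1_iff of_int_mult of_int_diff)
  have k23: "k2*k3 \<ge> 0" using nn by simp
  have k1p: "k1 \<ge> 1" using dk nn k23 by (cases "k1 = 0") auto
  have k4p: "k4 \<ge> 1" using dk nn k23 by (cases "k4 = 0") auto
  have tr: "trace M = of_int (k1 + k4)" using k1 k4 by (simp add: trace2)
  show ?thesis
  proof (cases "k1 + k4 = 2")
    case True
    then have "k1 = 1" "k4 = 1" using k1p k4p by auto
    then have "k2 * k3 = 0" using dk by simp
    then consider "k2 = 0" | "k3 = 0" by auto
    then show ?thesis
    proof cases
      case 1
      have "k3 \<noteq> 0"
      proof
        assume "k3 = 0"
        then have "M = mat 1" using 1 k1 k2 k3 k4 \<open>k1 = 1\<close> \<open>k4 = 1\<close>
          by (simp add: vec_eq_iff forall_2 mat_def)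
        then show False using nI by simp
      qed
      then show ?thesis using 1 k1 k2 k3 k4 \<open>k1 = 1\<close> \<open>k4 = 1\<close> nn tr True
        by (intro exI[of _ 1] exI[of _ 0] exI[of _ 1] exI[of _ "of_int k3"] exI[of _ 0]) auto
    next
      case 2
      have "k2 \<noteq> 0"
      proof
        assume "k2 = 0"
        then have "M = mat 1" using 2 k1 k2 k3 k4 \<open>k1 = 1\<close> \<open>k4 = 1\<close>
          by (simp add: vec_eq_iff forall_2 mat_def)
        then show False using nI by simp
      qed
      then show ?thesis using 2 k1 k2 k3 k4 \<open>k1 = 1\<close> \<open>k4 = 1\<close> nn tr True
        by (intro exI[of _ 1] exI[of _ 1] exI[of _ 0] exI[of _ 0] exI[of _ "of_int k2"]) auto
    qed
  next
    case False
    then have T3: "k1 + k4 \<ge> 3" using k1p k4p by auto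
    define T where "T = real_of_int (k1 + k4)"
    have T3': "T \<ge> 3" unfolding T_def using T3 by simp
    define r where "r = sqrt (T^2 - 4)"
    have T9: "3*3 \<le> T*T" using T3' by (intro mult_mono) auto
    have T4: "T^2 - 4 \<ge> 0" using T9 by (simp add: power2_eq_square)
    have r2: "r^2 = T^2 - 4" unfolding r_def using T4 by simp
    have r0: "r > 0" unfolding r_def using T9 by (simp add: power2_eq_square)
    have rT: "r < T"
    proof -
      have "r^2 < T^2" using r2 by simp
      then show ?thesis using T3' by (intro power_less_imp_less_base[of r 2 T]) auto
    qed
    define mu where "mu = (T + r)/2"
    have mu1: "mu > 1" unfolding mu_def using T3' r0 by simp
    have inv: "1/mu = (T - r)/2" unfolding mu_def using r2 r0 T3'
      by (simp add: field_simps power2_eq_square)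
    have musq: "mu * mu = T * mu - 1"
    proof -
      have r2': "r*r = T*T-4" using r2 by (simp add: power2_eq_square)
      show ?thesis unfolding mu_def using r2' by (simp add: field_simps)
    qed
    have k2p: "k2 > 0"
    proof (rule ccontr)
      assume "\<not> k2 > 0" then have "k2 = 0" using nn by simp
      then have "k1 * k4 = 1" using dk by simp
      then have "k1 = 1" "k4 = 1" using k1p k4p
        by (metis mult_cancel_left1 pos_zmult_eq_1_iff zero_less_one order_less_le_trans)+
      then show False using T3 by simp
    qed
    have k3p: "k3 > 0"
    proof (rule ccontr)
      assume "\<not> k3 > 0" then have "k3 = 0" using nn by simp
      then have "k1 * k4 = 1" using dk by simp
      then have "k1 = 1" "k4 = 1" using k1p k4p
        by (metis mult_cancel_left1 pos_zmult_eq_1_iff zero_less_one order_less_le_trans)+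
      then show False using T3 by simp
    qed
    define a1 where "a1 = real_of_int k2"
    define a2 where "a2 = mu - of_int k1"
    define w1 where "w1 = (mu - of_int k4) / of_int k2"
    have hT: "T = of_int k1 + of_int k4" unfolding T_def by simp
    have im: "1/mu = T - mu"
    proof -
      have "T - mu = (T - r)/2" by (simp add: mu_def field_simps)
      then show ?thesis using inv by simp
    qed
    have mi1: "1/mu < 1" using mu1 by simp
    have k4r: "real_of_int k4 \<ge> 1" using k4p by simp
    have k1r: "real_of_int k1 \<ge> 1" using k1p by simp
    have a2p: "a2 > 0" unfolding a2_def using im mi1 k4r hT by linarith
    have w1n: "mu - of_int k4 > 0" using im mi1 k1r hT by linarith
    have w1p: "w1 > 0" unfolding w1_def using w1n k2p by simp
    have e1: "M$1$1 = 1/mu + w1*a1" unfolding w1_def a1_def im using k1 k2p hT by simp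
    have e2: "M$1$2 = 1*a1" unfolding a1_def using k2 by simp
    have e4: "M$2$2 = 1/mu + 1*a2" unfolding a2_def im using k4 hT by simp
    have e3: "M$2$1 = w1*a2"
    proof -
      have "(mu - of_int k4) * (mu - of_int k1) = mu*mu - T*mu + of_int (k1*k4)" using hT
        by (simp add: algebra_simps)
      also have "\<dots> = of_int (k2 * k3)" using musq dk by (simp add: algebra_simps)
      finally have "(mu - of_int k4) * (mu - of_int k1) = of_int k2 * of_int k3" by simp
      then show ?thesis unfolding w1_def a2_def using k3 k2p by (simp add: field_simps)
    qed
    have trm: "trace M = mu + 1/mu" unfolding im using tr hT by simp
    show ?thesis
      apply (rule exI[of _ mu], rule exI[of _ a1], rule exI[of _ a2], rule exI[of _ w1], rule exI[of _ 1])
      using mu1 trm a2p w1p e1 e2 e3 e4 k2p unfolding a1_def by auto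
  qed
qed

lemma rat_contra:
  fixes l :: real assumes "l \<in> \<rat>" "l > 1" "l + 1/l \<in> \<int>" shows False
proof -
  obtain a b :: int where ab: "b > 0" "coprime a b" "l = of_int a / of_int b"
    using Rats_cases'[OF assms(1)] by metis
  obtain n :: int where n: "l + 1/l = of_int n" using assms(3) by (auto elim: Ints_cases)
  have "real_of_int a = l * of_int b" using ab by simp
  moreover have "l * of_int b > 0" using ab assms(2) by simp
  ultimately have "real_of_int a > 0" by simp
  then have apos: "a > 0" by simp
  have "real_of_int a * a + real_of_int b * b = of_int n * a * b"
  proof -
    have an: "real_of_int a \<noteq> 0" "real_of_int b \<noteq> 0" using ab apos by auto
    have "l + 1/l = of_int a / of_int b + of_int b / of_int a" using ab by simp
    also have "\<dots> = (of_int a * of_int a + of_int b * of_int b) / (of_int b * of_int a)"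
      using an by (simp add: add_frac_eq)
    finally have "(of_int a * of_int a + of_int b * of_int b) / (of_int b * of_int a) = (of_int n :: real)"
      using n by simp
    then have "of_int a * of_int a + of_int b * of_int b = (of_int n :: real) * (of_int b * of_int a)"
      using an by (simp add: divide_eq_eq)
    then show ?thesis by (simp add: algebra_simps)
  qed
  then have "real_of_int (a * a + b * b) = real_of_int (n * a * b)" by simp
  then have eq: "a * a + b * b = n * a * b" by (simp only: of_int_eq_iff)
  have dv: "b dvd a * a"
  proof -
    have "a * a = b * (n * a - b)" using eq by (simp add: algebra_simps)
    then show ?thesis by (rule dvdI)
  qed
  have cop: "coprime b (a * a)" using ab(2) by (simp add: coprime_commute)
  have "is_unit b" by (rule coprime_common_divisor[OF cop dvd_refl dv])
  then have b1: "b = 1" using ab(1) by (simp add: zdvd1_eq)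
  then have la: "l = of_int a" using ab by simp
  have "1/l = of_int (n - a)" using n la by simp
  moreover have "1/l > 0" "1/l < 1" using assms(2) by auto
  ultimately have "real_of_int (n - a) > 0" "real_of_int (n - a) < 1" by auto
  then have "n - a > 0" "n - a < 1" by simp_all
  then show False by simp
qed

lemma sim_phi:
  fixes A B P A' B' :: "real^2^2"
  assumes "A ** P = P ** A'" "B ** P = P ** B'"
  shows "phi A B u ** P = P ** phi A' B' u"
proof (induction u)
  case Nil then show ?case by (simp add: phi_Nil)
next
  case (Cons x u)
  have X: "phi_letter A B x ** P = P ** phi_letter A' B' x" using assms by (cases x) (auto simp: phi_letter_def)
  have "phi A B (x#u) ** P = phi_letter A B x ** (phi A B u ** P)"
    by (simp add: phi_Cons matrix_mul_assoc)
  also have "\<dots> = (phi_letter A B x ** P) ** phi A' B' u" using Cons by (simp add: matrix_mul_assoc)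
  also have "\<dots> = P ** phi A' B' (x#u)" using X by (simp add: phi_Cons matrix_mul_assoc)
  finally show ?case .
qed

lemma sim_trace:
  fixes X Y P :: "real^2^2"
  assumes "X ** P = P ** Y" "P$1$1 * P$2$2 - P$1$2 * P$2$1 \<noteq> 0"
  shows "trace X = trace Y"
proof -
  define d where "d = P$1$1 * P$2$2 - P$1$2 * P$2$1"
  define Q :: "real^2^2" where "Q = vector [vector [P$2$2/d, - P$1$2/d], vector [- P$2$1/d, P$1$1/d]]"
  have dnz: "d \<noteq> 0" using assms(2) unfolding d_def .
  have PQ: "P ** Q = mat 1"
  proof -
    have "(P ** Q)$1$1 = (P$1$1 * P$2$2 - P$1$2 * P$2$1) / d" unfolding Q_def
      by (simp add: mm_entry diff_divide_distrib)
    moreover have "(P ** Q)$2$2 = (P$1$1 * P$2$2 - P$1$2 * P$2$1) / d" unfolding Q_def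
      by (simp add: mm_entry diff_divide_distrib algebra_simps)
    moreover have "(P ** Q)$1$2 = 0" "(P ** Q)$2$1 = 0" unfolding Q_def
      by (simp_all add: mm_entry algebra_simps)
    ultimately show ?thesis using dnz unfolding d_def[symmetric]
      by (simp add: vec_eq_iff forall_2 mat_def)
  qed
  have QP: "Q ** P = mat 1"
  proof -
    have "(Q ** P)$1$1 = (P$1$1 * P$2$2 - P$1$2 * P$2$1) / d" unfolding Q_def
      by (simp add: mm_entry diff_divide_distrib algebra_simps)
    moreover have "(Q ** P)$2$2 = (P$1$1 * P$2$2 - P$1$2 * P$2$1) / d" unfolding Q_def
      by (simp add: mm_entry diff_divide_distrib algebra_simps)
    moreover have "(Q ** P)$1$2 = 0" "(Q ** P)$2$1 = 0" unfolding Q_def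
      by (simp_all add: mm_entry algebra_simps)
    ultimately show ?thesis using dnz unfolding d_def[symmetric]
      by (simp add: vec_eq_iff forall_2 mat_def)
  qed
  have "X = X ** (P ** Q)" using PQ by simp
  also have "\<dots> = P ** (Y ** Q)" using assms(1) by (simp add: matrix_mul_assoc)
  finally have "trace X = trace ((Y ** Q) ** P)" using trace_mul_sym by metis
  also have "\<dots> = trace Y" using QP by (simp add: matrix_mul_assoc[symmetric])
  finally show ?thesis .
qed

lemma Ints_less_le: "(x::real) \<in> \<int> \<Longrightarrow> y \<in> \<int> \<Longrightarrow> x < y \<Longrightarrow> x \<le> y - 1"
  by (auto elim!: Ints_cases)

lemma prod_int: "A \<in> SL2Z_nonneg \<Longrightarrow> B \<in> SL2Z_nonneg \<Longrightarrow> (A ** B)$i$j \<in> \<int>"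
  by (simp add: mm_entry SL_int)

lemma mu_less: "(mu::real) \<ge> 1 \<Longrightarrow> lam \<ge> 1 \<Longrightarrow> mu + 1/mu < lam + 1/lam \<Longrightarrow> mu < lam"
proof (rule ccontr)
  assume a: "mu \<ge> 1" "lam \<ge> 1" "mu + 1/mu < lam + 1/lam" "\<not> mu < lam"
  then have "lam \<le> mu" by simp
  have "(mu - lam) * (1 - 1/(mu*lam)) \<ge> 0"
  proof (rule mult_nonneg_nonneg)
    show "0 \<le> mu - lam" using \<open>lam \<le> mu\<close> by simp
    have "mu * lam \<ge> 1 * 1" using a by (intro mult_mono) auto
    then show "0 \<le> 1 - 1/(mu*lam)" by simp
  qed
  moreover have "(mu - lam) * (1 - 1/(mu*lam)) = mu + 1/mu - (lam + 1/lam)"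
    using a by (simp add: field_simps)
  ultimately have "mu + 1/mu - (lam + 1/lam) \<ge> 0" by simp
  then show False using a by simp
qed

lemma Bpow:
  fixes A' B' :: "real^2^2"
  assumes "B'$1$2 = 0"
  shows "(phi A' B' (replicate n Lb))$1$1 = (B'$1$1)^n \<and> (phi A' B' (replicate n Lb))$1$2 = 0 \<and>
         (phi A' B' (replicate n Lb))$2$2 = (B'$2$2)^n"
  by (induction n) (auto simp: phi_Nil phi_Cons phi_letter_def mm_entry mat_def assms)

lemma core:
  fixes A B :: "real^2^2"
  assumes A: "A \<in> SL2Z_nonneg" and B: "B \<in> SL2Z_nonneg"
    and nc: "A ** B \<noteq> B ** A"
    and tAB: "trace A < trace B"
    and tABB: "trace (A ** B) < trace (B ** B)"
  shows "trace (phi A B u) \<le> trace (phi A B (replicate (length u) Lb)) \<and>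
    (La \<in> set u \<longrightarrow> trace (phi A B u) < trace (phi A B (replicate (length u) Lb)))"
proof -
  have AnI: "A \<noteq> mat 1" using nc by auto
  obtain mu a1 a2 w1 w2 where sA: "mu \<ge> 1" "trace A = mu + 1/mu" "a1 \<ge> 0" "a2 \<ge> 0" "a1 + a2 > 0"
     "w1 \<ge> 0" "w2 \<ge> 0" "A$1$1 = 1/mu + w1*a1" "A$1$2 = w2*a1" "A$2$1 = w1*a2"
     "A$2$2 = 1/mu + w2*a2"
    using struct[OF A AnI] by blast
  have trA2: "trace A \<ge> 2"
  proof -
    have m0: "mu > 0" using sA(1) by simp
    have "mu * (mu + 1/mu - 2) = (mu - 1)^2" using m0 by (simp add: field_simps power2_eq_square)
    then have "mu * (mu + 1/mu - 2) \<ge> 0" by simp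
    then have "mu + 1/mu - 2 \<ge> 0" using m0 by (simp add: zero_le_mult_iff)
    then show ?thesis using sA(2) by simp
  qed
  have trB2: "trace B > 2" using trA2 tAB by simp
  have BnI: "B \<noteq> mat 1"
  proof
    assume "B = mat 1"
    then have "trace B = 2" by (simp add: trace_I)
    then show False using trB2 by simp
  qed
  obtain lam b1 b2 v1 v2 where sB: "lam \<ge> 1" "trace B = lam + 1/lam" "b1 \<ge> 0" "b2 \<ge> 0" "b1 + b2 > 0"
     "v1 \<ge> 0" "v2 \<ge> 0" "B$1$1 = 1/lam + v1*b1" "B$1$2 = v2*b1" "B$2$1 = v1*b2"
     "B$2$2 = 1/lam + v2*b2" "lam > 1" "b1 > 0" "b2 > 0" "v1 > 0" "v2 > 0"
    using struct[OF B BnI] trB2 by blast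
  have mul: "mu < lam" using mu_less[OF sA(1) sB(1)] tAB sA(2) sB(2) by simp
  have mu0: "mu > 0" using sA(1) by simp
  have lam0: "lam > 0" using sB(1) by simp
  have omA: "w1*a1 + w2*a2 = mu - 1/mu"
  proof -
    have "det A = 1" using A by (rule SL_int(3))
    then have "(1/mu + w1*a1) * (1/mu + w2*a2) - (w2*a1) * (w1*a2) = 1" using sA det2[of A] by simp
    then have "1/mu * (1/mu + (w1*a1 + w2*a2)) = 1" by (simp add: algebra_simps)
    then show ?thesis using mu0 by (simp add: field_simps)
  qed
  have omB: "v1*b1 + v2*b2 = lam - 1/lam"
  proof -
    have "det B = 1" using B by (rule SL_int(3))
    then have "(1/lam + v1*b1) * (1/lam + v2*b2) - (v2*b1) * (v1*b2) = 1" using sB det2[of B] by simp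
    then have "1/lam * (1/lam + (v1*b1 + v2*b2)) = 1" by (simp add: algebra_simps)
    then show ?thesis using lam0 by (simp add: field_simps)
  qed
  define p where "p = w1*b1 + w2*b2"
  define s where "s = v1*a1 + v2*a2"
  have p0: "p \<ge> 0" unfolding p_def using sA sB by simp
  have s0: "s > 0"
  proof (cases "a1 > 0")
    case True
    have "v1*a1 > 0" using True sB(15) by (simp add: mult_pos_pos)
    moreover have "v2*a2 \<ge> 0" using sA(4) sB(16) by simp
    ultimately show ?thesis unfolding s_def by linarith
  next
    case False
    then have "a2 > 0" using sA by simp
    have "v2*a2 > 0" using \<open>a2 > 0\<close> sB(16) by (simp add: mult_pos_pos)
    moreover have "v1*a1 \<ge> 0" using sA(3) sB(15) by simp
    ultimately show ?thesis unfolding s_def by linarith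
  qed
  define P :: "real^2^2" where "P = vector [vector [a1, b1], vector [a2, b2]]"
  define A' :: "real^2^2" where "A' = vector [vector [mu, p], vector [0, 1/mu]]"
  define B' :: "real^2^2" where "B' = vector [vector [1/lam, 0], vector [s, lam]]"
  have AP: "A ** P = P ** A'"
  proof -
    have h1: "A$1$1 * a1 + A$1$2 * a2 = a1 / mu + a1 * (w1*a1 + w2*a2)" using sA by (simp add: algebra_simps)
    have h2: "A$2$1 * a1 + A$2$2 * a2 = a2 / mu + a2 * (w1*a1 + w2*a2)" using sA by (simp add: algebra_simps)
    have g1: "a1 / mu + a1 * (mu - 1/mu) = a1 * mu" by (simp add: algebra_simps)
    have g2: "a2 / mu + a2 * (mu - 1/mu) = a2 * mu" by (simp add: algebra_simps)
    have "A$1$1 * a1 + A$1$2 * a2 = a1 * mu" using h1 omA g1 by simp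
    moreover have "A$2$1 * a1 + A$2$2 * a2 = a2 * mu" using h2 omA g2 by simp
    moreover have "A$1$1 * b1 + A$1$2 * b2 = a1 * p + b1 / mu" using sA unfolding p_def by (simp add: algebra_simps)
    moreover have "A$2$1 * b1 + A$2$2 * b2 = a2 * p + b2 / mu" using sA unfolding p_def by (simp add: algebra_simps)
    ultimately show ?thesis unfolding P_def A'_def by (simp add: vec_eq_iff forall_2 mm_entry)
  qed
  have "B$1$1 * b1 + B$1$2 * b2 = b1 / lam + b1 * (v1*b1 + v2*b2)" using sB by (simp add: algebra_simps)
  also have "\<dots> = b1 / lam + b1 * (lam - 1/lam)" using omB by simp
  also have "\<dots> = lam * b1" by (simp add: algebra_simps)
  finally have Bb1: "B$1$1 * b1 + B$1$2 * b2 = lam * b1" .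
  have "B$2$1 * b1 + B$2$2 * b2 = b2 / lam + b2 * (v1*b1 + v2*b2)" using sB by (simp add: algebra_simps)
  also have "\<dots> = b2 / lam + b2 * (lam - 1/lam)" using omB by simp
  also have "\<dots> = lam * b2" by (simp add: algebra_simps)
  finally have Bb2: "B$2$1 * b1 + B$2$2 * b2 = lam * b2" .
  have BP: "B ** P = P ** B'"
  proof -
    have f1: "B$1$1 * a1 + B$1$2 * a2 = a1 / lam + b1 * s" using sB unfolding s_def by (simp add: algebra_simps)
    have f2: "B$2$1 * a1 + B$2$2 * a2 = a2 / lam + b2 * s" using sB unfolding s_def by (simp add: algebra_simps)
    have "(B ** P)$1$1 = (P ** B')$1$1" using f1 unfolding P_def B'_def by (simp add: mm_entry)
    moreover have "(B ** P)$2$1 = (P ** B')$2$1" using f2 unfolding P_def B'_def by (simp add: mm_entry)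
    moreover have "(B ** P)$1$2 = (P ** B')$1$2" using Bb1 unfolding P_def B'_def by (simp add: mm_entry mult.commute)
    moreover have "(B ** P)$2$2 = (P ** B')$2$2" using Bb2 unfolding P_def B'_def by (simp add: mm_entry mult.commute)
    ultimately show ?thesis by (simp add: vec_eq_iff forall_2)
  qed

  have Ab1': "A$1$1 * b1 + A$1$2 * b2 = a1 * p + b1 / mu" using sA unfolding p_def by (simp add: algebra_simps)
  have Ab2': "A$2$1 * b1 + A$2$2 * b2 = a2 * p + b2 / mu" using sA unfolding p_def by (simp add: algebra_simps)
  have detP: "a1*b2 - b1*a2 \<noteq> 0"
  proof
    assume dep: "a1*b2 - b1*a2 = 0"
    have ap1: "a1 * p = (mu - 1/mu) * b1"
    proof -
      have "a1 * p = w1*a1*b1 + w2*(a1*b2)" unfolding p_def by (simp add: algebra_simps)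
      also have "\<dots> = w1*a1*b1 + w2*(b1*a2)" using dep by simp
      also have "\<dots> = (w1*a1 + w2*a2) * b1" by (simp add: algebra_simps)
      finally show ?thesis using omA by simp
    qed
    have ap2: "a2 * p = (mu - 1/mu) * b2"
    proof -
      have "a2 * p = w1*(b1*a2) + w2*a2*b2" unfolding p_def by (simp add: algebra_simps)
      also have "\<dots> = w1*(a1*b2) + w2*a2*b2" using dep by simp
      also have "\<dots> = (w1*a1 + w2*a2) * b2" by (simp add: algebra_simps)
      finally show ?thesis using omA by simp
    qed
    have Ab1: "A$1$1 * b1 + A$1$2 * b2 = mu * b1" using Ab1' ap1 mu0 by (simp add: field_simps)
    have Ab2: "A$2$1 * b1 + A$2$2 * b2 = mu * b2" using Ab2' ap2 mu0 by (simp add: field_simps)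
    define k11 where "k11 = (A**B)$1$1 - (B**A)$1$1"
    define k12 where "k12 = (A**B)$1$2 - (B**A)$1$2"
    define k21 where "k21 = (A**B)$2$1 - (B**A)$2$1"
    define k22 where "k22 = (A**B)$2$2 - (B**A)$2$2"
    have kint: "k11 \<in> \<int>" "k12 \<in> \<int>" unfolding k11_def k12_def
      using prod_int[OF A B] prod_int[OF B A] by auto
    have K1: "k11 * b1 + k12 * b2 = 0"
    proof -
      have "(A**B)$1$1*b1 + (A**B)$1$2*b2 = A$1$1*(B$1$1*b1 + B$1$2*b2) + A$1$2*(B$2$1*b1+B$2$2*b2)"
        by (simp add: mm_entry algebra_simps)
      also have "\<dots> = lam * (A$1$1 * b1 + A$1$2 * b2)" using Bb1 Bb2 by (simp add: algebra_simps)
      also have "\<dots> = lam * mu * b1" using Ab1 by simp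
      finally have e1: "(A**B)$1$1*b1 + (A**B)$1$2*b2 = lam * mu * b1" .
      have "(B**A)$1$1*b1 + (B**A)$1$2*b2 = B$1$1*(A$1$1*b1 + A$1$2*b2) + B$1$2*(A$2$1*b1+A$2$2*b2)"
        by (simp add: mm_entry algebra_simps)
      also have "\<dots> = mu * (B$1$1 * b1 + B$1$2 * b2)" using Ab1 Ab2 by (simp add: algebra_simps)
      also have "\<dots> = lam * mu * b1" using Bb1 by simp
      finally have e2: "(B**A)$1$1*b1 + (B**A)$1$2*b2 = lam * mu * b1" .
      show ?thesis using e1 e2 unfolding k11_def k12_def by (simp add: algebra_simps)
    qed
    have K2: "k21 * b1 + k22 * b2 = 0"
    proof -
      have "(A**B)$2$1*b1 + (A**B)$2$2*b2 = A$2$1*(B$1$1*b1 + B$1$2*b2) + A$2$2*(B$2$1*b1+B$2$2*b2)"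
        by (simp add: mm_entry algebra_simps)
      also have "\<dots> = lam * (A$2$1 * b1 + A$2$2 * b2)" using Bb1 Bb2 by (simp add: algebra_simps)
      also have "\<dots> = lam * mu * b2" using Ab2 by simp
      finally have e1: "(A**B)$2$1*b1 + (A**B)$2$2*b2 = lam * mu * b2" .
      have "(B**A)$2$1*b1 + (B**A)$2$2*b2 = B$2$1*(A$1$1*b1 + A$1$2*b2) + B$2$2*(A$2$1*b1+A$2$2*b2)"
        by (simp add: mm_entry algebra_simps)
      also have "\<dots> = mu * (B$2$1 * b1 + B$2$2 * b2)" using Ab1 Ab2 by (simp add: algebra_simps)
      also have "\<dots> = lam * mu * b2" using Bb2 by simp
      finally have e2: "(B**A)$2$1*b1 + (B**A)$2$2*b2 = lam * mu * b2" .
      show ?thesis using e1 e2 unfolding k21_def k22_def by (simp add: algebra_simps)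
    qed
    have ktr: "k11 + k22 = 0"
      using trace_mul_sym[of A B] unfolding k11_def k22_def trace2 by simp
    show False
    proof (cases "k12 = 0")
      case True
      then have "k11 = 0" using K1 sB(13) by simp
      then have "k22 = 0" using ktr by simp
      then have "k21 = 0" using K2 sB(13) by simp
      then have "A ** B = B ** A" using \<open>k11 = 0\<close> \<open>k22 = 0\<close> True
        unfolding k11_def k12_def k21_def k22_def by (simp add: vec_eq_iff forall_2)
      then show False using nc by simp
    next
      case False
      have "b2 / b1 = - k11 / k12" using K1 False sB(13) by (simp add: field_simps)
      moreover have "k11 \<in> \<rat>" "k12 \<in> \<rat>" using kint Ints_subset_Rats by auto
      ultimately have q: "b2 / b1 \<in> \<rat>" by (simp add: Rats_divide)
      have "lam = B$1$1 + B$1$2 * (b2 / b1)" using Bb1 sB(13) by (simp add: field_simps)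
      moreover have "B$1$1 \<in> \<rat>" "B$1$2 \<in> \<rat>" using SL_int(1)[OF B] Ints_subset_Rats by auto
      ultimately have "lam \<in> \<rat>" using q by (metis Rats_add Rats_mult)
      moreover have "lam + 1/lam \<in> \<int>" using sB(2) SL_int(1)[OF B] by (metis trace2 Ints_add)
      ultimately show False using rat_contra sB(12) by blast
    qed
  qed
  have Pdet: "P$1$1 * P$2$2 - P$1$2 * P$2$1 \<noteq> 0" using detP unfolding P_def by (simp add: algebra_simps)
  have trsim: "trace (phi A B u) = trace (phi A' B' u)" for u
    by (rule sim_trace[OF sim_phi[OF AP BP] Pdet])
  have trAB: "trace (A ** B) = trace (A' ** B')"
  proof (rule sim_trace[OF _ Pdet])
    show "(A ** B) ** P = P ** (A' ** B')" using AP BP by (metis matrix_mul_assoc)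
  qed
  have trBB: "trace (B ** B) = trace (B' ** B')"
  proof (rule sim_trace[OF _ Pdet])
    show "(B ** B) ** P = P ** (B' ** B')" using BP by (metis matrix_mul_assoc)
  qed
  define x where "x = 1/lam"
  define y where "y = 1/mu"
  have lx: "lam * x = 1" unfolding x_def using lam0 by simp
  have my: "mu * y = 1" unfolding y_def using mu0 by simp
  have x0: "x > 0" "x < 1" unfolding x_def using sB(12) by auto
  have y0: "y > 0" unfolding y_def using mu0 by simp
  have tApBp: "trace (A' ** B') = mu * x + p * s + lam * y"
    unfolding A'_def B'_def x_def y_def by (simp add: trace2 mm_entry)
  have tBpBp: "trace (B' ** B') = x * x + lam * lam"
    unfolding B'_def x_def by (simp add: trace2 mm_entry)
  have trint: "trace (A ** B) \<in> \<int>" "trace (B ** B) \<in> \<int>"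
    using prod_int[OF A B] prod_int[OF B B] by (simp_all add: trace2)
  have H: "mu * x + p * s + lam * y \<le> x * x + lam * lam - 1"
    using Ints_less_le[OF trint tABB] trAB trBB tApBp tBpBp by simp
  have key: "p * s < (lam - y) * (lam - x)"
  proof -
    have id: "(lam - y) * (lam - x) = lam*lam - 1 - lam*y + x*y" using lx by (simp add: algebra_simps)
    have "x * (y - x + mu) > 0" using x0 y0 sA(1) by simp
    then show ?thesis using H id by (simp add: algebra_simps)
  qed
  have lx0: "lam - x > 0" using x0 sB(12) by simp
  define t where "t = s / (lam - x)"
  have t0: "t > 0" unfolding t_def using s0 lx0 by simp
  have cA2: "t * A'$1$2 + A'$2$2 < lam"
  proof -
    have k2: "s * p < (lam - y) * (lam - x)" using key by (simp add: mult.commute)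
    have "s * p / (lam - x) < lam - y" using k2 by (simp add: pos_divide_less_eq[OF lx0])
    then show ?thesis unfolding t_def A'_def y_def by (simp add: algebra_simps)
  qed
  have cA1: "t * A'$1$1 + A'$2$1 < lam * t" unfolding A'_def using mul t0 by simp
  have cB1: "t * B'$1$1 + B'$2$1 \<le> lam * t"
  proof -
    have "t * (lam - x) = s" unfolding t_def using lx0 by simp
    then show ?thesis unfolding B'_def x_def by (simp add: algebra_simps)
  qed
  have cB2: "t * B'$1$2 + B'$2$2 \<le> lam" unfolding B'_def by simp
  have nA': "nonneg2 A'" unfolding A'_def nonneg2_def using p0 mu0 by simp
  have nB': "nonneg2 B'" unfolding B'_def nonneg2_def using s0 lam0 by simp
  have dA': "det A' = 1" unfolding A'_def det2 using mu0 by simp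
  have dB': "det B' = 1" unfolding B'_def det2 using lam0 by simp
  have pA': "A'$1$1 > 0" "A'$2$2 > 0" unfolding A'_def using mu0 by simp_all
  have pB': "B'$1$1 > 0" "B'$2$2 > 0" unfolding B'_def using lam0 by simp_all
  note WB = word_bound[OF nA' nB' dA' dB' pA' pB' t0 lam0 cA1 cA2 cB1 cB2, of u]
  define M where "M = phi A' B' u"
  define L where "L = lam ^ length u"
  have L0: "L > 0" unfolding L_def using lam0 by simp
  have WB': "nonneg2 M" "det M = 1" "t*M$1$1 + M$2$1 \<le> L * t" "t*M$1$2 + M$2$2 \<le> L"
    "La \<in> set u \<Longrightarrow> t*M$1$1 + M$2$1 < L * t \<and> t*M$1$2 + M$2$2 < L"
    using WB unfolding M_def L_def by auto
  have nM: "M$1$1 \<ge> 0" "M$1$2 \<ge> 0" "M$2$1 \<ge> 0" "M$2$2 \<ge> 0" using WB'(1) by (auto simp: nonneg2_def)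
  have dM: "M$1$1 * M$2$2 - M$1$2 * M$2$1 = 1" using WB'(2) det2[of M] by simp
  have Brep: "trace (phi A B (replicate (length u) Lb)) = L + 1/L"
  proof -
    have "B'$1$2 = 0" unfolding B'_def by simp
    note bp = Bpow[OF this, of A' "length u"]
    have "trace (phi A' B' (replicate (length u) Lb)) = (1/lam)^length u + lam^length u"
      using bp unfolding trace2 B'_def by simp
    then show ?thesis unfolding trsim L_def by (simp add: power_one_over)
  qed
  have "trace (phi A B u) = trace M" unfolding M_def by (rule trsim)
  then have tu: "trace (phi A B u) = M$1$1 + M$2$2" by (simp add: trace2)
  show ?thesis
    using trace_bound[OF nM dM t0 L0 WB'(3,4)] trace_bound_strict[OF nM dM t0 L0] WB'(5) tu Brep
    by auto
qed

lemma wpow_single: "wpow [x] n = replicate n x"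
  by (simp add: wpow_def)

lemma wpow_one: "wpow u (Suc 0) = u"
  by (simp add: wpow_def)

theorem theorem5p7:
  fixes A B :: "real^2^2"
  assumes "A \<in> SL2Z_nonneg" and "B \<in> SL2Z_nonneg"
    and "A ** B \<noteq> B ** A"
    and "well_oriented A B"
    and "trace A < trace B"
    and "trace (A ** B) < trace (B ** B)"
  shows "complete_optimal A B {[Lb]} \<and>
         (\<forall>S. complete_optimal A B S \<longrightarrow> S = {[Lb]})"
proof -
  note C = core[OF assms(1,2,3,5,6)]
  have maxb: "maximal A B [Lb]"
    unfolding maximal_def wle_def
  proof (intro conjI allI impI)
    show "[Lb] \<noteq> []" by simp
    fix u :: word
    have e1: "trw A B (wpow u (length [Lb])) = trace (phi A B u)" by (simp add: trw_def wpow_one)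
    have e2: "trw A B (wpow [Lb] (length u)) = trace (phi A B (replicate (length u) Lb))"
      by (simp add: trw_def wpow_single)
    show "trw A B (wpow u (length [Lb])) \<le> trw A B (wpow [Lb] (length u))"
      unfolding e1 e2 using C[of u] by (rule conjunct1)
  qed
  have maxu: "u = replicate (length u) Lb \<and> u \<noteq> []" if "maximal A B u" for u
  proof -
    have ne: "u \<noteq> []" and le: "wle A B [Lb] u" using that unfolding maximal_def by auto
    have e1: "trw A B (wpow u (length [Lb])) = trace (phi A B u)" by (simp add: trw_def wpow_one)
    have e2: "trw A B (wpow [Lb] (length u)) = trace (phi A B (replicate (length u) Lb))"
      by (simp add: trw_def wpow_single)
    have "trace (phi A B (replicate (length u) Lb)) \<le> trace (phi A B u)"
      using le unfolding wle_def e1 e2 .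
    then have "La \<notin> set u" using C[of u] by auto
    then have "\<forall>x\<in>set u. x = Lb"
    proof (intro ballI)
      fix x assume "La \<notin> set u" "x \<in> set u"
      then show "x = Lb" by (cases x) auto
    qed
    then have "replicate (length u) Lb = u" by (rule replicate_length_same)
    then show ?thesis using ne by simp
  qed
  have lynb: "lyndon [Lb]" unfolding lyndon_def by simp
  have co: "complete_optimal A B {[Lb]}"
    unfolding complete_optimal_def
  proof (intro conjI ballI allI impI)
    fix w assume "w \<in> {[Lb]}" then show "maximal A B w" "lyndon w" using maxb lynb by auto
  next
    fix u assume "maximal A B u"
    then have uu: "u = replicate (length u) Lb \<and> u \<noteq> []" by (rule maxu)
    have u: "u = replicate (length u) Lb" "u \<noteq> []" using uu by (rule conjunct1, rule conjunct2)
    have r: "replicate (length u) Lb = u" using u(1) by (rule sym)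
    have "wpow (rotate 0 [Lb]) (length u) = u" using r by (simp add: wpow_single)
    moreover have "0 < length u" using u(2) by simp
    ultimately show "\<exists>w\<in>{[Lb]}. \<exists>k j. 0 < k \<and> u = wpow (rotate j w) k"
      by (intro bexI[of _ "[Lb]"] exI[of _ "length u"] exI[of _ 0]) auto
  qed
  have uniq: "S = {[Lb]}" if S: "complete_optimal A B S" for S
  proof -
    have sub: "w = [Lb]" if "w \<in> S" for w
    proof -
      have all: "\<forall>w\<in>S. maximal A B w \<and> lyndon w" using S unfolding complete_optimal_def by (rule conjunct1)
      have m: "maximal A B w" and l: "lyndon w" using all that by blast+
      have ww: "w = replicate (length w) Lb \<and> w \<noteq> []" by (rule maxu[OF m])
      have w: "w = replicate (length w) Lb" "w \<noteq> []" using ww by (rule conjunct1, rule conjunct2)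
      have "length w = 1"
      proof (rule ccontr)
        assume "length w \<noteq> 1"
        then have "(0::nat) < 1 \<and> 1 < length w" using w(2) by (cases w) auto
        moreover have "\<forall>k. 0 < k \<and> k < length w \<longrightarrow> (w, rotate k w) \<in> lexord letter_less"
          using l unfolding lyndon_def by (rule conjunct2)
        ultimately have "(w, rotate 1 w) \<in> lexord letter_less" by blast
        moreover have "rotate 1 w = w"
        proof -
          have "rotate 1 w = rotate1 w" by simp
          also have "\<dots> = rotate1 (replicate (length w) Lb)" by (rule arg_cong[OF w(1)])
          also have "\<dots> = replicate (length w) Lb" by (rule rotate1_replicate)
          also have "\<dots> = w" by (rule w(1)[symmetric])
          finally show ?thesis .
        qed
        ultimately have "(w, w) \<in> lexord letter_less" by simp
        moreover have "(w, w) \<notin> lexord letter_less"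
          by (rule lexord_irreflexive) (simp add: letter_less_def)
        ultimately show False by simp
      qed
      then have "replicate (length w) Lb = [Lb]" by simp
      with w(1) show ?thesis by (rule trans)
    qed
    have "\<forall>u. maximal A B u \<longrightarrow> (\<exists>w \<in> S. \<exists>k j. 0 < k \<and> u = wpow (rotate j w) k)"
      using S unfolding complete_optimal_def by (rule conjunct2)
    then have "\<exists>w \<in> S. \<exists>k j. 0 < k \<and> [Lb] = wpow (rotate j w) k" using maxb by blast
    then obtain w where wS: "w \<in> S" by blast
    have "w = [Lb]" using wS by (rule sub)
    then have LS: "[Lb] \<in> S" using wS by simp
    show ?thesis
    proof (rule set_eqI)
      fix v show "v \<in> S \<longleftrightarrow> v \<in> {[Lb]}" using sub[of v] LS by auto
    qed
  qed
  show ?thesis using co uniq by blast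
qed

end
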